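(* Let $G$ be a graph all of whose internal vertices are of type $0$ or $1$, and let $n_0$ denote the maximum number of vertices of a connected component of $G_0$ (with $n_0=0$ if $G_0$ is the null graph). Then: (1) $G$ is well-covered if and only if $G_0$ is well-covered and for every independent set $I$ in $G_1$ of size at most $n_0$ we have $i(G_0-N(I))=\alpha(G_0)$; (2) $\mu_\alpha(G)\leq 1$ if and only if $\mu_\alpha(G_0)\leq 1$ and for every independent set $I$ in $G_1$ of size at most $2n_0$ we have $\alpha(G_0)-i(G_0-N(I))\leq 1$.
   Context: All graphs are finite and simple; the null graph is allowed. For a graph $F$, $\alpha(F)$ is the maximum size of an independent set, $i(F)$ the minimum size of an inclusion-maximal independent set (both $0$ for the null graph), $\mu_\alpha(F)=\alpha(F)-i(F)$, and $F$ is well-covered if $\mu_\alpha(F)=0$. $N(I)=\bigcup_{v\in I}N(v)$ and $G_0-N(I)$ is obtained from $G_0$ by deleting the vertices of $N(I)$. Types of vertices: let $U$ be the set of vertices of $G$ whose connected component is a complete graph. In $G-U$, vertices of degree $1$ are leaves and the others are internal vertices. An internal vertex adjacent to exactly $k$ leaves is of type $k$; every vertex of $U$ is of type $0$. $G_i$ denotes the subgraph of $G$ induced by all vertices of type $i$. *)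

theory Defs
  imports Main
begin

text \<open>Induced subgraphs are represented by their vertex sets S (with the same E).\<close>

definition simple_graph :: "'a set \<Rightarrow> ('a \<Rightarrow> 'a \<Rightarrow> bool) \<Rightarrow> bool" where
  "simple_graph V E \<longleftrightarrow> finite V \<and> (\<forall>u v. E u v \<longrightarrow> u \<in> V \<and> v \<in> V)
     \<and> (\<forall>u v. E u v \<longrightarrow> E v u) \<and> (\<forall>v. \<not> E v v)"

definition indep :: "'a set \<Rightarrow> ('a \<Rightarrow> 'a \<Rightarrow> bool) \<Rightarrow> 'a set \<Rightarrow> bool" where
  "indep S E I \<longleftrightarrow> I \<subseteq> S \<and> (\<forall>u\<in>I. \<forall>v\<in>I. \<not> E u v)"

definition maximal_indep :: "'a set \<Rightarrow> ('a \<Rightarrow> 'a \<Rightarrow> bool) \<Rightarrow> 'a set \<Rightarrow> bool" where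
  "maximal_indep S E I \<longleftrightarrow> indep S E I \<and> (\<forall>J. indep S E J \<and> I \<subseteq> J \<longrightarrow> J = I)"

definition alpha :: "'a set \<Rightarrow> ('a \<Rightarrow> 'a \<Rightarrow> bool) \<Rightarrow> nat" where
  "alpha S E = Max (card ` {I. indep S E I})"

definition imin :: "'a set \<Rightarrow> ('a \<Rightarrow> 'a \<Rightarrow> bool) \<Rightarrow> nat" where
  "imin S E = Min (card ` {I. maximal_indep S E I})"

definition mu_alpha :: "'a set \<Rightarrow> ('a \<Rightarrow> 'a \<Rightarrow> bool) \<Rightarrow> int" where
  "mu_alpha S E = int (alpha S E) - int (imin S E)"

definition well_covered :: "'a set \<Rightarrow> ('a \<Rightarrow> 'a \<Rightarrow> bool) \<Rightarrow> bool" where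
  "well_covered S E \<longleftrightarrow> mu_alpha S E = 0"

definition nbhd :: "'a set \<Rightarrow> ('a \<Rightarrow> 'a \<Rightarrow> bool) \<Rightarrow> 'a \<Rightarrow> 'a set" where
  "nbhd V E v = {u \<in> V. E v u}"

definition nbhd_set :: "'a set \<Rightarrow> ('a \<Rightarrow> 'a \<Rightarrow> bool) \<Rightarrow> 'a set \<Rightarrow> 'a set" where
  "nbhd_set V E I = (\<Union>v\<in>I. nbhd V E v)"

definition component :: "'a set \<Rightarrow> ('a \<Rightarrow> 'a \<Rightarrow> bool) \<Rightarrow> 'a \<Rightarrow> 'a set" where
  "component S E v = {w. (\<lambda>x y. x \<in> S \<and> y \<in> S \<and> E x y)\<^sup>*\<^sup>* v w}"

definition is_clique :: "('a \<Rightarrow> 'a \<Rightarrow> bool) \<Rightarrow> 'a set \<Rightarrow> bool" where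
  "is_clique E C \<longleftrightarrow> (\<forall>u\<in>C. \<forall>w\<in>C. u \<noteq> w \<longrightarrow> E u w)"

definition Uset :: "'a set \<Rightarrow> ('a \<Rightarrow> 'a \<Rightarrow> bool) \<Rightarrow> 'a set" where
  "Uset V E = {v \<in> V. is_clique E (component V E v)}"

definition degree :: "'a set \<Rightarrow> ('a \<Rightarrow> 'a \<Rightarrow> bool) \<Rightarrow> 'a \<Rightarrow> nat" where
  "degree S E v = card {u \<in> S. E v u}"

definition leaves :: "'a set \<Rightarrow> ('a \<Rightarrow> 'a \<Rightarrow> bool) \<Rightarrow> 'a set" where
  "leaves V E = {v \<in> V - Uset V E. degree (V - Uset V E) E v = 1}"

definition internal :: "'a set \<Rightarrow> ('a \<Rightarrow> 'a \<Rightarrow> bool) \<Rightarrow> 'a set" where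
  "internal V E = {v \<in> V - Uset V E. degree (V - Uset V E) E v \<noteq> 1}"

definition leaf_count :: "'a set \<Rightarrow> ('a \<Rightarrow> 'a \<Rightarrow> bool) \<Rightarrow> 'a \<Rightarrow> nat" where
  "leaf_count V E v = card {u \<in> leaves V E. E v u}"

text \<open>Vertex set of G_k: internal vertices of type k (plus U when k = 0).\<close>
definition type_set :: "'a set \<Rightarrow> ('a \<Rightarrow> 'a \<Rightarrow> bool) \<Rightarrow> nat \<Rightarrow> 'a set" where
  "type_set V E k = {v \<in> internal V E. leaf_count V E v = k} \<union> (if k = 0 then Uset V E else {})"

definition max_comp_size :: "'a set \<Rightarrow> ('a \<Rightarrow> 'a \<Rightarrow> bool) \<Rightarrow> nat" where
  "max_comp_size S E = Max (insert 0 ((\<lambda>v. card (component S E v)) ` S))"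

end

theory Submission
  imports Defs
begin


lemma indep_finite: "finite S \<Longrightarrow> finite {I. indep S E I}"
  by (rule finite_subset[of _ "Pow S"]) (auto simp: indep_def)

lemma indep_empty[simp]: "indep S E {}"
  by (simp add: indep_def)

lemma indep_subset: "indep S E I \<Longrightarrow> J \<subseteq> I \<Longrightarrow> J \<subseteq> T \<Longrightarrow> indep T E J"
  unfolding indep_def by blast

lemma indep_fin: "finite S \<Longrightarrow> indep S E I \<Longrightarrow> finite I"
  by (auto simp: indep_def intro: finite_subset)

lemma alpha_ge: "finite S \<Longrightarrow> indep S E I \<Longrightarrow> card I \<le> alpha S E"
  unfolding alpha_def by (rule Max_ge) (auto simp: indep_finite)

lemma alpha_ex: "finite S \<Longrightarrow> \<exists>I. indep S E I \<and> card I = alpha S E"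
proof -
  assume f: "finite S"
  have "alpha S E \<in> card ` {I. indep S E I}"
    unfolding alpha_def by (rule Max_in) (simp add: indep_finite f, blast intro: indep_empty)
  thus ?thesis by auto
qed

lemma extend_maximal:
  assumes f: "finite S" and i: "indep S E I"
  shows "\<exists>J. maximal_indep S E J \<and> I \<subseteq> J"
proof -
  have "\<exists>J. (indep S E J \<and> I \<subseteq> J) \<and> (\<forall>J'. indep S E J' \<and> I \<subseteq> J' \<longrightarrow> card J' \<le> card J)"
  proof (rule Lattices_Big.ex_has_greatest_nat[where b="Suc (card S)"])
    show "indep S E I \<and> I \<subseteq> I" using i by simp
    show "\<forall>y. indep S E y \<and> I \<subseteq> y \<longrightarrow> card y < Suc (card S)"
      using f by (auto simp: indep_def intro: card_mono le_imp_less_Suc)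
  qed
  then obtain J where J: "indep S E J" "I \<subseteq> J"
    "\<And>J'. indep S E J' \<Longrightarrow> I \<subseteq> J' \<Longrightarrow> card J' \<le> card J" by blast
  have "maximal_indep S E J"
    unfolding maximal_indep_def
  proof (intro conjI allI impI J(1))
    fix J' assume a: "indep S E J' \<and> J \<subseteq> J'"
    hence "card J' \<le> card J" using J by blast
    moreover have "finite J'" using a f indep_fin by blast
    ultimately show "J' = J" using a card_seteq by blast
  qed
  thus ?thesis using J by blast
qed

lemma imin_le: "finite S \<Longrightarrow> maximal_indep S E J \<Longrightarrow> imin S E \<le> card J"
proof -
  assume f: "finite S" and m: "maximal_indep S E J"
  have "finite {I. maximal_indep S E I}"
    by (rule finite_subset[OF _ indep_finite[OF f]]) (auto simp: maximal_indep_def)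
  thus ?thesis unfolding imin_def by (intro Min_le finite_imageI) (use m in auto)
qed

lemma imin_ex: "finite S \<Longrightarrow> \<exists>J. maximal_indep S E J \<and> card J = imin S E"
proof -
  assume f: "finite S"
  have ne: "{I. maximal_indep S E I} \<noteq> {}" using extend_maximal[OF f indep_empty] by blast
  have "imin S E \<in> card ` {I. maximal_indep S E I}"
    unfolding imin_def
  proof (rule Min_in)
    show "finite (card ` {I. maximal_indep S E I})"
      by (rule finite_imageI, rule finite_subset[OF _ indep_finite[OF f]]) (auto simp: maximal_indep_def)
  qed (use ne in auto)
  thus ?thesis by auto
qed

lemma imin_le_alpha: "finite S \<Longrightarrow> imin S E \<le> alpha S E"
  by (metis alpha_ge imin_ex imin_le maximal_indep_def)

lemma alpha_mono: "finite T \<Longrightarrow> S \<subseteq> T \<Longrightarrow> alpha S E \<le> alpha T E"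
  by (metis alpha_ex alpha_ge indep_subset order_refl indep_def order_trans finite_subset)

lemma alpha_empty[simp]: "alpha {} E = 0"
  using alpha_ex[of "{}" E] by (auto simp: indep_def)



definition clsd :: "('a \<Rightarrow> 'a \<Rightarrow> bool) \<Rightarrow> 'a set \<Rightarrow> 'a set \<Rightarrow> bool" where
  "clsd E X W \<longleftrightarrow> W \<subseteq> X \<and> (\<forall>x\<in>W. \<forall>y\<in>X - W. \<not> E x y \<and> \<not> E y x)"

lemma alpha_split:
  assumes f: "finite X" and c: "clsd E X W"
  shows "alpha X E = alpha W E + alpha (X - W) E"
proof (rule antisym)
  have fW: "finite W" using c f by (auto simp: clsd_def intro: finite_subset)
  obtain I where I: "indep X E I" "card I = alpha X E" using alpha_ex[OF f] by blast
  have "card I = card (I \<inter> W) + card (I - W)"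
    using I(1) f indep_fin card_Int_Diff by blast
  also have "card (I \<inter> W) \<le> alpha W E"
    by (rule alpha_ge[OF fW], rule indep_subset[OF I(1)]) auto
  also have "card (I - W) \<le> alpha (X - W) E"
    by (rule alpha_ge, use f in simp, rule indep_subset[OF I(1)]) (use I(1) in \<open>auto simp: indep_def\<close>)
  finally show "alpha X E \<le> alpha W E + alpha (X - W) E" using I by simp
next
  have fW: "finite W" using c f by (auto simp: clsd_def intro: finite_subset)
  obtain I1 where I1: "indep W E I1" "card I1 = alpha W E" using alpha_ex[OF fW] by blast
  obtain I2 where I2: "indep (X - W) E I2" "card I2 = alpha (X - W) E" using alpha_ex[of "X - W" E] f by blast
  have "indep X E (I1 \<union> I2)" using I1(1) I2(1) c unfolding indep_def clsd_def by blast
  hence "card (I1 \<union> I2) \<le> alpha X E" by (rule alpha_ge[OF f])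
  moreover have "card (I1 \<union> I2) = card I1 + card I2"
    by (rule card_Un_disjoint) (use I1(1) I2(1) fW f in \<open>auto simp: indep_def intro: finite_subset\<close>)
  ultimately show "alpha W E + alpha (X - W) E \<le> alpha X E" using I1 I2 by simp
qed

lemma comp_sub: "v \<in> A \<Longrightarrow> component A E v \<subseteq> A"
proof
  fix w assume v: "v \<in> A" and "w \<in> component A E v"
  hence "(\<lambda>x y. x \<in> A \<and> y \<in> A \<and> E x y)\<^sup>*\<^sup>* v w" by (simp add: component_def)
  thus "w \<in> A" by (induction rule: rtranclp_induct) (use v in auto)
qed

lemma comp_self: "v \<in> component A E v"
  by (simp add: component_def)

lemma comp_in_clsd:
  assumes c: "clsd E A X" and v: "v \<in> X"
  shows "component A E v \<subseteq> X"
proof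
  fix w assume "w \<in> component A E v"
  hence "(\<lambda>x y. x \<in> A \<and> y \<in> A \<and> E x y)\<^sup>*\<^sup>* v w" by (simp add: component_def)
  thus "w \<in> X" by (induction rule: rtranclp_induct) (use v c in \<open>auto simp: clsd_def\<close>)
qed

lemma comp_clsd:
  assumes v: "v \<in> A" and sym: "\<And>u w. E u w \<Longrightarrow> E w u"
  shows "clsd E A (component A E v)"
proof -
  have main: "\<not> E x y" if x: "x \<in> component A E v" and y: "y \<in> A - component A E v" for x y
  proof
    assume "E x y"
    have xA: "x \<in> A" using x comp_sub[OF v] by blast
    have r: "(\<lambda>x y. x \<in> A \<and> y \<in> A \<and> E x y)\<^sup>*\<^sup>* v x" using x by (simp add: component_def)
    hence "(\<lambda>x y. x \<in> A \<and> y \<in> A \<and> E x y)\<^sup>*\<^sup>* v y"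
      using r xA y \<open>E x y\<close> by (auto intro: rtranclp.rtrancl_into_rtrancl)
    thus False using y by (simp add: component_def)
  qed
  show ?thesis unfolding clsd_def using main comp_sub[OF v] sym by blast
qed

lemma comp_card:
  assumes "finite A" "v \<in> A"
  shows "card (component A E v) \<le> max_comp_size A E"
  unfolding max_comp_size_def by (rule Max_ge) (use assms in auto)

lemma deficiency:
  assumes fA: "finite A" and sym: "\<And>u w. E u w \<Longrightarrow> E w u" and J: "indep A E J"
  shows "clsd E A X \<Longrightarrow> card (J \<inter> X) + k \<le> alpha X E \<Longrightarrow>
    \<exists>W. clsd E A W \<and> W \<subseteq> X \<and> card W \<le> k * max_comp_size A E \<and> card (J \<inter> W) + k \<le> alpha W E"
proof (induction "card X" arbitrary: X k rule: less_induct)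
  case less
  show ?case
  proof (cases "k = 0")
    case True
    thus ?thesis by (intro exI[of _ "{}"]) (auto simp: clsd_def)
  next
    case k0: False
    show ?thesis
    proof (cases "X = {}")
      case True
      thus ?thesis using less.prems k0 by simp
    next
      case False
      then obtain v where vX: "v \<in> X" by blast
      have XA: "X \<subseteq> A" using less.prems by (simp add: clsd_def)
      have fX: "finite X" using XA fA by (rule finite_subset)
      have vA: "v \<in> A" using vX XA by blast
      define C where "C = component A E v"
      have cC: "clsd E A C" unfolding C_def by (rule comp_clsd[OF vA sym])
      have CX: "C \<subseteq> X" unfolding C_def by (rule comp_in_clsd[OF less.prems(1) vX])
      have vC: "v \<in> C" unfolding C_def by (rule comp_self)
      have cardC: "card C \<le> max_comp_size A E" unfolding C_def by (rule comp_card[OF fA vA])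
      have cXC: "clsd E A (X - C)" using cC less.prems(1) CX unfolding clsd_def by blast
      have cCX: "clsd E X C" using cC CX XA unfolding clsd_def by blast
      have lt: "card (X - C) < card X" using fX vC CX by (intro psubset_card_mono) auto
      have aX: "alpha X E = alpha C E + alpha (X - C) E" by (rule alpha_split[OF fX cCX])
      have jX: "card (J \<inter> X) = card (J \<inter> C) + card (J \<inter> (X - C))"
      proof -
        have "J \<inter> X = (J \<inter> C) \<union> (J \<inter> (X - C))" using CX by blast
        moreover have "finite (J \<inter> X)" using fX by simp
        ultimately show ?thesis by (simp add: card_Un_disjoint disjoint_iff)
      qed
      have fC: "finite C" using CX fX by (rule finite_subset)
      have jC: "card (J \<inter> C) \<le> alpha C E"
        by (rule alpha_ge[OF fC], rule indep_subset[OF J]) auto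
      define d where "d = alpha C E - card (J \<inter> C)"
      show ?thesis
      proof (cases "k \<le> d")
        case True
        have "card C \<le> k * max_comp_size A E" using cardC k0
        proof -
          have "max_comp_size A E \<le> k * max_comp_size A E" using k0 by simp
          thus ?thesis using cardC by linarith
        qed
        thus ?thesis using True cC CX jC unfolding d_def by (intro exI[of _ C]) auto
      next
        case False
        have "card (J \<inter> (X - C)) + (k - d) \<le> alpha (X - C) E"
          using less.prems(2) aX jX jC False unfolding d_def by linarith
        from less.hyps[OF lt cXC this] obtain W' where W':
          "clsd E A W'" "W' \<subseteq> X - C" "card W' \<le> (k - d) * max_comp_size A E"
          "card (J \<inter> W') + (k - d) \<le> alpha W' E" by blast
        show ?thesis
        proof (cases "d = 0")
          case True
          thus ?thesis using W' by (intro exI[of _ W']) auto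
        next
          case d0: False
          define W where "W = C \<union> W'"
          have cW: "clsd E A W" using cC W'(1) unfolding W_def clsd_def by blast
          have fW': "finite W'" using W'(2) fX by (meson finite_Diff finite_subset)
          have cCW: "clsd E W C" using cC W'(1,2) unfolding W_def clsd_def by blast
          have WC: "W - C = W'" using W'(2) unfolding W_def by blast
          have fW: "finite W" unfolding W_def using fC fW' by simp
          have aW: "alpha W E = alpha C E + alpha W' E" using alpha_split[OF fW cCW] WC by simp
          have jW: "card (J \<inter> W) = card (J \<inter> C) + card (J \<inter> W')"
            unfolding W_def Int_Un_distrib
            by (rule card_Un_disjoint) (use fC fW' W'(2) in auto)
          have cardW: "card W \<le> card C + card W'" unfolding W_def by (rule card_Un_le)
          have "card C + card W' \<le> max_comp_size A E + (k - d) * max_comp_size A E"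
            using cardC W'(3) by simp
          also have "\<dots> = (1 + (k - d)) * max_comp_size A E" by simp
          also have "\<dots> \<le> k * max_comp_size A E" using d0 False by (intro mult_le_mono1) linarith
          finally have "card W \<le> k * max_comp_size A E" using cardW by linarith
          moreover have "W \<subseteq> X" using CX W'(2) unfolding W_def by blast
          moreover have "card (J \<inter> W) + k \<le> alpha W E" using aW jW W'(4) jC False unfolding d_def by linarith
          ultimately show ?thesis using cW by blast
        qed
      qed
    qed
  qed
qed


lemma nbhd_set_mono: "I' \<subseteq> I \<Longrightarrow> nbhd_set V E I' \<subseteq> nbhd_set V E I"
  by (auto simp: nbhd_set_def)

lemma reduction:
  assumes fV: "finite V" and sym: "\<And>u w. E u w \<Longrightarrow> E w u" and AV: "A \<subseteq> V"
    and J: "maximal_indep (A - nbhd_set V E I) E J" and k: "card J + k \<le> alpha A E"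
  shows "\<exists>I'. I' \<subseteq> I \<and> card I' \<le> k * max_comp_size A E \<and>
           imin (A - nbhd_set V E I') E + k \<le> alpha A E"
proof -
  have fA: "finite A" using AV fV by (rule finite_subset)
  have Ji: "indep (A - nbhd_set V E I) E J" using J by (simp add: maximal_indep_def)
  have JA: "indep A E J" using Ji by (auto simp: indep_def)
  have JsubA: "J \<subseteq> A" using JA by (simp add: indep_def)
  have cA: "clsd E A A" by (simp add: clsd_def)
  have "card (J \<inter> A) + k \<le> alpha A E" using k JsubA by (simp add: Int_absorb2)
  from deficiency[OF fA sym JA cA this] obtain W where W:
    "clsd E A W" "card W \<le> k * max_comp_size A E" "card (J \<inter> W) + k \<le> alpha W E" by blast
  have WA: "W \<subseteq> A" using W(1) by (simp add: clsd_def)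
  have fW: "finite W" using WA fA by (rule finite_subset)
  define g where "g u = (SOME v. v \<in> I \<and> E v u)" for u
  have g: "g u \<in> I \<and> E (g u) u" if "u \<in> nbhd_set V E I" for u
  proof -
    have "\<exists>v. v \<in> I \<and> E v u" using that by (auto simp: nbhd_set_def nbhd_def)
    thus ?thesis unfolding g_def by (rule someI_ex)
  qed
  define I' where "I' = g ` (nbhd_set V E I \<inter> W)"
  have I'I: "I' \<subseteq> I" unfolding I'_def using g by blast
  have cardI': "card I' \<le> k * max_comp_size A E"
  proof -
    have "card I' \<le> card (nbhd_set V E I \<inter> W)" unfolding I'_def by (rule card_image_le) (use fW in simp)
    also have "\<dots> \<le> card W" by (rule card_mono[OF fW]) auto
    finally show ?thesis using W(2) by linarith
  qed
  have NI': "nbhd_set V E I' \<subseteq> nbhd_set V E I" by (rule nbhd_set_mono[OF I'I])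
  have cover: "x \<in> nbhd_set V E I'" if "x \<in> nbhd_set V E I" "x \<in> W" for x
  proof -
    have "g x \<in> I'" unfolding I'_def using that by blast
    moreover have "E (g x) x" using g that(1) by blast
    moreover have "x \<in> V" using that(2) WA AV by blast
    ultimately show ?thesis by (auto simp: nbhd_set_def nbhd_def)
  qed
  define S where "S = A - nbhd_set V E I'"
  have fS: "finite S" unfolding S_def using fA by simp
  have "indep S E (J \<inter> W)" using Ji NI' unfolding S_def indep_def by blast
  from extend_maximal[OF fS this] obtain K where K: "maximal_indep S E K" "J \<inter> W \<subseteq> K" by blast
  have Ki: "indep S E K" using K(1) by (simp add: maximal_indep_def)
  have KW: "K \<inter> W = J \<inter> W"
  proof (rule ccontr)
    assume "K \<inter> W \<noteq> J \<inter> W"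
    then obtain x where x: "x \<in> K" "x \<in> W" "x \<notin> J" using K(2) by blast
    have xS: "x \<in> S" using x Ki by (auto simp: indep_def)
    have xN: "x \<notin> nbhd_set V E I" using cover xS x(2) unfolding S_def by blast
    have "indep (A - nbhd_set V E I) E (insert x J)"
      unfolding indep_def
    proof (intro conjI ballI)
      show "insert x J \<subseteq> A - nbhd_set V E I" using xS xN Ji unfolding S_def indep_def by blast
    next
      fix u v assume u: "u \<in> insert x J" and v: "v \<in> insert x J"
      have noedge: "\<not> E x j" if "j \<in> J" for j
      proof (cases "j \<in> W")
        case True
        hence "j \<in> K" using K(2) that by blast
        thus ?thesis using x(1) Ki by (simp add: indep_def)
      next
        case False
        hence "j \<in> A - W" using that JsubA by blast
        thus ?thesis using W(1) x(2) by (simp add: clsd_def)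
      qed
      have xx: "\<not> E x x" using x(1) Ki by (simp add: indep_def)
      have JJ: "\<forall>a\<in>J. \<forall>b\<in>J. \<not> E a b" using Ji by (simp add: indep_def)
      show "\<not> E u v"
        using u v noedge xx JJ sym by blast
    qed
    hence "insert x J = J" using J by (auto simp: maximal_indep_def)
    thus False using x(3) by blast
  qed
  have fK: "finite K" using Ki fS indep_fin by blast
  have c1: "card K = card (K \<inter> W) + card (K - W)" using fK card_Int_Diff by blast
  have c2: "card (K - W) \<le> alpha (A - W) E"
    by (rule alpha_ge, use fA in simp, rule indep_subset[OF Ki]) (use Ki in \<open>auto simp: indep_def S_def\<close>)
  have "card K + k \<le> alpha W E + alpha (A - W) E" using c1 c2 W(3) unfolding KW by linarith
  also have "\<dots> = alpha A E" using alpha_split[OF fA W(1)] by simp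
  finally have "card K + k \<le> alpha A E" .
  moreover have "imin S E \<le> card K" by (rule imin_le[OF fS K(1)])
  ultimately show ?thesis using I'I cardI' unfolding S_def by (intro exI[of _ I']) auto
qed



locale core =
  fixes V :: "'a set" and E :: "'a \<Rightarrow> 'a \<Rightarrow> bool" and A B L :: "'a set" and f :: "'a \<Rightarrow> 'a"
  assumes fin: "finite V" and edgeV: "\<And>u v. E u v \<Longrightarrow> u \<in> V \<and> v \<in> V"
    and sym: "\<And>u v. E u v \<Longrightarrow> E v u"
    and Vdec: "V = A \<union> B \<union> L" and AB: "A \<inter> B = {}" and AL: "A \<inter> L = {}" and BL: "B \<inter> L = {}"
    and fbij: "bij_betw f B L" and fE: "\<And>b. b \<in> B \<Longrightarrow> E b (f b)"
    and Lnb: "\<And>l q. l \<in> L \<Longrightarrow> E l q \<Longrightarrow> q \<in> B \<and> f q = l"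
begin

lemma finA: "finite A" and finB: "finite B" and finL: "finite L"
  using fin Vdec by auto

lemma fL: "b \<in> B \<Longrightarrow> f b \<in> L" using fbij by (auto simp: bij_betw_def)
lemma finj: "inj_on f B" using fbij by (auto simp: bij_betw_def)
lemma Lsurj: "l \<in> L \<Longrightarrow> \<exists>b\<in>B. l = f b" using fbij by (auto simp: bij_betw_def)
lemma cardLB: "card L = card B" using bij_betw_same_card[OF fbij] by simp

lemma leaf_edge: "b \<in> B \<Longrightarrow> E (f b) q \<Longrightarrow> q = b"
  using Lnb fL finj by (metis inj_onD)
lemma leaf_edge': "b \<in> B \<Longrightarrow> E q (f b) \<Longrightarrow> q = b"
  using leaf_edge sym by blast

lemma P1: "alpha V E = card B + alpha A E"
proof (rule antisym)
  obtain S where S: "indep V E S" "card S = alpha V E" using alpha_ex[OF fin] by blast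
  have fS: "finite S" using S(1) fin indep_fin by blast
  have SV: "S \<subseteq> V" using S(1) by (simp add: indep_def)
  have "card S \<le> card (S \<inter> A) + card (S \<inter> B) + card (S \<inter> L)"
  proof -
    have "S = (S \<inter> A) \<union> (S \<inter> B) \<union> (S \<inter> L)" using SV Vdec by blast
    hence "card S \<le> card ((S \<inter> A) \<union> (S \<inter> B)) + card (S \<inter> L)" by (metis card_Un_le)
    also have "card ((S \<inter> A) \<union> (S \<inter> B)) \<le> card (S \<inter> A) + card (S \<inter> B)" by (rule card_Un_le)
    finally show ?thesis by linarith
  qed
  moreover have "card (S \<inter> A) \<le> alpha A E"
    by (rule alpha_ge[OF finA], rule indep_subset[OF S(1)]) auto
  moreover have "card (S \<inter> L) \<le> card (B - S)"
  proof -
    have "S \<inter> L \<subseteq> f ` (B - S)"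
    proof
      fix l assume l: "l \<in> S \<inter> L"
      then obtain b where b: "b \<in> B" "l = f b" using Lsurj by blast
      have "b \<notin> S" using fE[OF b(1)] b l S(1) by (auto simp: indep_def)
      thus "l \<in> f ` (B - S)" using b by blast
    qed
    hence "card (S \<inter> L) \<le> card (f ` (B - S))" by (rule card_mono[rotated]) (use finB in simp)
    also have "\<dots> \<le> card (B - S)" by (rule card_image_le) (use finB in simp)
    finally show ?thesis .
  qed
  moreover have "card (B - S) + card (S \<inter> B) = card B"
    using finB by (metis Int_commute add.commute card_Int_Diff)
  ultimately show "alpha V E \<le> card B + alpha A E" using S(2) by linarith
next
  obtain M where M: "indep A E M" "card M = alpha A E" using alpha_ex[OF finA] by blast
  have MA: "M \<subseteq> A" using M(1) by (simp add: indep_def)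
  have "indep V E (M \<union> L)"
    unfolding indep_def
  proof (intro conjI ballI)
    show "M \<union> L \<subseteq> V" using MA Vdec by blast
  next
    fix u v assume u: "u \<in> M \<union> L" and v: "v \<in> M \<union> L"
    show "\<not> E u v"
    proof
      assume e: "E u v"
      show False
      proof (cases "u \<in> L")
        case True
        thus False using Lnb[OF True e] v MA AB BL by blast
      next
        case False
        show False
        proof (cases "v \<in> L")
          case True
          thus False using Lnb[OF True sym[OF e]] u MA AB BL by blast
        next
          case False
          thus False using \<open>u \<notin> L\<close> u v e M(1) by (auto simp: indep_def)
        qed
      qed
    qed
  qed
  hence "card (M \<union> L) \<le> alpha V E" by (rule alpha_ge[OF fin])
  moreover have "card (M \<union> L) = card M + card L"
    by (rule card_Un_disjoint) (use MA AL finL finA in \<open>auto intro: finite_subset\<close>)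
  ultimately show "card B + alpha A E \<le> alpha V E" using M(2) cardLB by simp
qed


lemma Pa:
  assumes S: "maximal_indep V E S"
  shows "\<exists>I J. indep B E I \<and> maximal_indep (A - nbhd_set V E I) E J \<and> card S = card B + card J"
proof -
  have Si: "indep V E S" using S by (simp add: maximal_indep_def)
  have SV: "S \<subseteq> V" using Si by (simp add: indep_def)
  have fS: "finite S" using SV fin by (rule finite_subset)
  have noE: "\<not> E u v" if "u \<in> S" "v \<in> S" for u v using Si that by (simp add: indep_def)
  have maxS: "T = S" if "indep V E T" "S \<subseteq> T" for T using S that by (simp add: maximal_indep_def)
  define I where "I = S \<inter> B"
  define J where "J = S \<inter> A"
  have Ii: "indep B E I" unfolding I_def by (rule indep_subset[OF Si]) auto
  have SL1: "S \<inter> L \<subseteq> f ` (B - I)"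
  proof
    fix l assume l: "l \<in> S \<inter> L"
    then obtain b where b: "b \<in> B" and lb: "l = f b" using Lsurj by blast
    have lS: "f b \<in> S" using l lb by simp
    have "b \<notin> S"
    proof
      assume "b \<in> S"
      hence "\<not> E b (f b)" using noE lS by simp
      thus False using fE[OF b] by simp
    qed
    hence "b \<in> B - I" using b unfolding I_def by simp
    thus "l \<in> f ` (B - I)" unfolding lb by (rule imageI)
  qed
  have SL2: "f b \<in> S \<inter> L" if bBI: "b \<in> B - I" for b
  proof -
    have bB: "b \<in> B" and bS: "b \<notin> S" using bBI unfolding I_def by auto
    have lL: "f b \<in> L" using fL bB by simp
    have fbB: "f b \<notin> B" using lL BL by blast
    have bl: "b \<noteq> f b" using fbB bB by metis
    have a1: "\<not> E (f b) w" if "w \<in> insert (f b) S" for w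
    proof
      assume "E (f b) w"
      hence "w = b" by (rule leaf_edge[OF bB])
      thus False using that bS bl by simp
    qed
    have a2: "\<not> E w (f b)" if "w \<in> insert (f b) S" for w
    proof
      assume "E w (f b)"
      hence "w = b" by (rule leaf_edge'[OF bB])
      thus False using that bS bl by simp
    qed
    have "indep V E (insert (f b) S)"
      unfolding indep_def
    proof (intro conjI ballI)
      show "insert (f b) S \<subseteq> V" using SV lL Vdec by blast
    next
      fix u v assume u: "u \<in> insert (f b) S" and v: "v \<in> insert (f b) S"
      show "\<not> E u v"
      proof (cases "u = f b")
        case True thus ?thesis using a1 v by simp
      next
        case False
        hence uS: "u \<in> S" using u by simp
        show ?thesis
        proof (cases "v = f b")
          case True thus ?thesis using a2 u by simp
        next
          case False thus ?thesis using uS v noE by simp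
        qed
      qed
    qed
    hence "insert (f b) S = S" using maxS by blast
    thus ?thesis using lL by blast
  qed
  have SL: "S \<inter> L = f ` (B - I)" using SL1 SL2 by blast
  have JN: "J \<subseteq> A - nbhd_set V E I"
  proof
    fix x assume x: "x \<in> J"
    have "x \<notin> nbhd_set V E I"
    proof
      assume "x \<in> nbhd_set V E I"
      then obtain v where v: "v \<in> I" "E v x" by (auto simp: nbhd_set_def nbhd_def)
      have "v \<in> S" "x \<in> S" using v(1) x unfolding I_def J_def by auto
      thus False using noE v(2) by blast
    qed
    thus "x \<in> A - nbhd_set V E I" using x unfolding J_def by blast
  qed
  have Jm: "maximal_indep (A - nbhd_set V E I) E J"
    unfolding maximal_indep_def
  proof (intro conjI allI impI)
    show "indep (A - nbhd_set V E I) E J" unfolding indep_def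
    proof (intro conjI ballI)
      show "J \<subseteq> A - nbhd_set V E I" by (rule JN)
    next
      fix u v assume "u \<in> J" "v \<in> J"
      thus "\<not> E u v" using noE unfolding J_def by simp
    qed
  next
    fix J' assume a: "indep (A - nbhd_set V E I) E J' \<and> J \<subseteq> J'"
    show "J' = J"
    proof (rule ccontr)
      assume "J' \<noteq> J"
      then obtain x where x: "x \<in> J'" "x \<notin> J" using a by blast
      have xA: "x \<in> A" "x \<notin> nbhd_set V E I" using a x by (auto simp: indep_def)
      have xS: "x \<notin> S" using x xA unfolding J_def by blast
      have xx: "\<not> E x w" "\<not> E w x" if "w \<in> S" for w
      proof -
        have "w \<in> A \<or> w \<in> B \<or> w \<in> L" using that SV Vdec by blast
        moreover {
          assume "w \<in> A"
          hence "w \<in> J'" using that a unfolding J_def by blast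
          hence "\<not> E x w \<and> \<not> E w x" using x(1) a by (simp add: indep_def)
        } moreover {
          assume wB: "w \<in> B"
          hence wI: "w \<in> I" using that unfolding I_def by blast
          have "\<not> E w x"
          proof
            assume "E w x"
            hence "x \<in> nbhd_set V E I" using wI edgeV by (auto simp: nbhd_set_def nbhd_def)
            thus False using xA by blast
          qed
          hence "\<not> E x w \<and> \<not> E w x" using sym by blast
        } moreover {
          assume wL: "w \<in> L"
          have "\<not> E w x" using Lnb[OF wL] xA AB by blast
          hence "\<not> E x w \<and> \<not> E w x" using sym by blast
        }
        ultimately show "\<not> E x w" "\<not> E w x" by blast+
      qed
      have xxx: "\<not> E x x" using x(1) a by (simp add: indep_def)
      have "indep V E (insert x S)"
        unfolding indep_def
      proof (intro conjI ballI)
        show "insert x S \<subseteq> V" using SV xA Vdec by blast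
      next
        fix u v assume "u \<in> insert x S" "v \<in> insert x S"
        thus "\<not> E u v" using xx xxx noE by auto
      qed
      hence "insert x S = S" using maxS by blast
      thus False using xS by blast
    qed
  qed
  have "S = J \<union> I \<union> (S \<inter> L)" using SV Vdec unfolding I_def J_def by blast
  hence "card S = card ((J \<union> I) \<union> (S \<inter> L))" by (rule arg_cong)
  also have "\<dots> = card (J \<union> I) + card (S \<inter> L)"
    by (rule card_Un_disjoint) (use fS AL BL in \<open>auto simp: I_def J_def\<close>)
  also have "card (J \<union> I) = card J + card I"
    by (rule card_Un_disjoint) (use fS AB in \<open>auto simp: I_def J_def\<close>)
  also have "card (S \<inter> L) = card (B - I)"
    unfolding SL by (rule card_image, rule inj_on_subset[OF finj]) auto
  also have "card (B - I) = card B - card I" using finB unfolding I_def by (simp add: card_Diff_subset)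
  finally have "card S = card B + card J"
    using card_mono[OF finB, of I] unfolding I_def by auto
  thus ?thesis using Ii Jm by blast
qed


lemma Pb:
  assumes Ii: "indep B E I" and Jm: "maximal_indep (A - nbhd_set V E I) E J"
  shows "\<exists>S. maximal_indep V E S \<and> card S = card B + card J"
proof -
  have IB: "I \<subseteq> B" using Ii by (simp add: indep_def)
  have Ji: "indep (A - nbhd_set V E I) E J" using Jm by (simp add: maximal_indep_def)
  have JA: "J \<subseteq> A" and JN: "J \<inter> nbhd_set V E I = {}" using Ji by (auto simp: indep_def)
  have noI: "\<not> E u v" if "u \<in> I" "v \<in> I" for u v using Ii that by (simp add: indep_def)
  have noJ: "\<not> E u v" if "u \<in> J" "v \<in> J" for u v using Ji that by (simp add: indep_def)
  have IJ: "\<not> E u v" if "u \<in> I" "v \<in> J" for u v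
  proof
    assume "E u v"
    hence "v \<in> nbhd_set V E I" using that edgeV by (auto simp: nbhd_set_def nbhd_def)
    thus False using JN that by blast
  qed
  define F where "F = f ` (B - I)"
  have FL: "F \<subseteq> L" unfolding F_def using fL by blast
  have Fnb: "q \<in> B - I" if lF: "l \<in> F" and lq: "E l q" for l q
  proof -
    obtain b where b: "b \<in> B - I" and lb: "l = f b" using lF unfolding F_def by blast
    have "E (f b) q" using lq lb by simp
    hence "q = b" using b leaf_edge by blast
    thus ?thesis using b by simp
  qed
  define S where "S = I \<union> J \<union> F"
  have SV: "S \<subseteq> V" unfolding S_def using IB JA FL Vdec by blast
  have memS: "w \<in> I \<or> w \<in> J \<or> w \<in> F" if "w \<in> S" for w using that unfolding S_def by blast
  have noF1: "\<not> E l w" if "l \<in> F" "w \<in> S" for l w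
  proof
    assume "E l w"
    hence wBI: "w \<in> B - I" using Fnb that(1) by blast
    have "w \<notin> J" using wBI JA AB by blast
    moreover have "w \<notin> F" using wBI FL BL by blast
    ultimately show False using memS[OF that(2)] wBI by blast
  qed
  have noF2: "\<not> E w l" if "l \<in> F" "w \<in> S" for l w
    using noF1[OF that] sym by blast
  have Si: "indep V E S"
    unfolding indep_def
  proof (intro conjI ballI)
    show "S \<subseteq> V" by (rule SV)
  next
    fix u v assume u: "u \<in> S" and v: "v \<in> S"
    show "\<not> E u v"
    proof (cases "u \<in> F")
      case True thus ?thesis using noF1 v by blast
    next
      case uF: False
      show ?thesis
      proof (cases "v \<in> F")
        case True thus ?thesis using noF2 u by blast
      next
        case vF: False
        have "u \<in> I \<or> u \<in> J" "v \<in> I \<or> v \<in> J" using memS u v uF vF by blast+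
        thus ?thesis using noI noJ IJ sym by blast
      qed
    qed
  qed
  have Sm: "maximal_indep V E S"
    unfolding maximal_indep_def
  proof (intro conjI allI impI Si)
    fix T assume a: "indep V E T \<and> S \<subseteq> T"
    have noT: "\<not> E u v" if "u \<in> T" "v \<in> T" for u v using a that by (simp add: indep_def)
    show "T = S"
    proof (rule ccontr)
      assume "T \<noteq> S"
      then obtain x where xT: "x \<in> T" and xS: "x \<notin> S" using a by blast
      have xV: "x \<in> V" using xT a by (auto simp: indep_def)
      hence "x \<in> A \<or> x \<in> B \<or> x \<in> L" using Vdec by blast
      moreover {
        assume xB: "x \<in> B"
        hence "x \<in> B - I" using xS unfolding S_def by blast
        hence "f x \<in> S" unfolding S_def F_def by blast
        hence "\<not> E x (f x)" using noT xT a by blast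
        hence False using fE[OF xB] by simp
      } moreover {
        assume xL: "x \<in> L"
        then obtain b where b: "b \<in> B" and xb: "x = f b" using Lsurj by blast
        have "b \<in> I"
        proof (rule ccontr)
          assume "b \<notin> I"
          hence "f b \<in> S" using b unfolding S_def F_def by blast
          thus False using xS xb by simp
        qed
        hence "b \<in> T" using a unfolding S_def by blast
        hence "\<not> E b (f b)" using noT xT xb by simp
        hence False using fE[OF b] by simp
      } moreover {
        assume xA: "x \<in> A"
        have xN: "x \<notin> nbhd_set V E I"
        proof
          assume "x \<in> nbhd_set V E I"
          then obtain v where v: "v \<in> I" "E v x" by (auto simp: nbhd_set_def nbhd_def)
          have "v \<in> T" using v(1) a unfolding S_def by blast
          thus False using noT xT v(2) by blast
        qed
        have "indep (A - nbhd_set V E I) E (insert x J)"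
          unfolding indep_def
        proof (intro conjI ballI)
          show "insert x J \<subseteq> A - nbhd_set V E I" using xA xN Ji by (auto simp: indep_def)
        next
          fix u v assume "u \<in> insert x J" "v \<in> insert x J"
          moreover have "J \<subseteq> T" using a unfolding S_def by blast
          ultimately have "u \<in> T" "v \<in> T" using xT by blast+
          thus "\<not> E u v" by (rule noT)
        qed
        hence "insert x J = J" using Jm by (auto simp: maximal_indep_def)
        hence "x \<in> S" unfolding S_def by blast
        hence False using xS by simp
      }
      ultimately show False by blast
    qed
  qed
  have fJ: "finite J" using JA finA by (rule finite_subset)
  have fI: "finite I" using IB finB by (rule finite_subset)
  have fF: "finite F" unfolding F_def using finB by simp
  have "card S = card (I \<union> J) + card F"
    unfolding S_def by (rule card_Un_disjoint) (use fI fJ fF FL IB JA BL AL in auto)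
  also have "card (I \<union> J) = card I + card J"
    by (rule card_Un_disjoint) (use fI fJ IB JA AB in auto)
  also have "card F = card (B - I)"
    unfolding F_def by (rule card_image, rule inj_on_subset[OF finj]) auto
  also have "card (B - I) = card B - card I" using finB IB by (simp add: card_Diff_subset fI)
  finally have "card S = card B + card J" using card_mono[OF finB IB] by linarith
  thus ?thesis using Sm by blast
qed

lemma P2: "\<exists>I. indep B E I \<and> imin V E = card B + imin (A - nbhd_set V E I) E"
proof -
  obtain S where S: "maximal_indep V E S" "card S = imin V E" using imin_ex[OF fin] by blast
  obtain I J where IJ: "indep B E I" "maximal_indep (A - nbhd_set V E I) E J" "card S = card B + card J"
    using Pa[OF S(1)] by blast
  have fA': "finite (A - nbhd_set V E I)" using finA by simp
  have "imin (A - nbhd_set V E I) E \<le> card J" by (rule imin_le[OF fA' IJ(2)])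
  moreover obtain J' where J': "maximal_indep (A - nbhd_set V E I) E J'" "card J' = imin (A - nbhd_set V E I) E"
    using imin_ex[OF fA'] by blast
  moreover obtain S' where "maximal_indep V E S'" "card S' = card B + card J'" using Pb[OF IJ(1) J'(1)] by blast
  moreover have "imin V E \<le> card S'" using imin_le[OF fin] calculation(4) by blast
  ultimately have "imin V E = card B + imin (A - nbhd_set V E I) E" using S(2) IJ(3) by linarith
  thus ?thesis using IJ(1) by blast
qed

lemma P3: "indep B E I \<Longrightarrow> imin V E \<le> card B + imin (A - nbhd_set V E I) E"
proof -
  assume Ii: "indep B E I"
  have fA': "finite (A - nbhd_set V E I)" using finA by simp
  obtain J' where J': "maximal_indep (A - nbhd_set V E I) E J'" "card J' = imin (A - nbhd_set V E I) E"
    using imin_ex[OF fA'] by blast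
  obtain S' where "maximal_indep V E S'" "card S' = card B + card J'" using Pb[OF Ii J'(1)] by blast
  thus ?thesis using imin_le[OF fin] J'(2) by fastforce
qed

lemma P4: "imin (A - nbhd_set V E I) E \<le> alpha A E"
  using imin_le_alpha[of "A - nbhd_set V E I" E] alpha_mono[OF finA, of "A - nbhd_set V E I" E] finA by simp

end


lemma comp_eq:
  assumes sym: "\<And>u v. E u v \<Longrightarrow> E v u" and xy: "x \<in> V" "y \<in> V" "E x y"
  shows "component V E x = component V E y"
proof -
  let ?R = "\<lambda>x y. x \<in> V \<and> y \<in> V \<and> E x y"
  have "?R x y" "?R y x" using xy sym by auto
  hence "component V E y \<subseteq> component V E x" "component V E x \<subseteq> component V E y"
    unfolding component_def by (auto intro: converse_rtranclp_into_rtranclp)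
  thus ?thesis by blast
qed

lemma noU:
  assumes sym: "\<And>u v. E u v \<Longrightarrow> E v u" and u: "u \<in> Uset V E" and x: "x \<in> V" and e: "E x u"
  shows "x \<in> Uset V E"
proof -
  have uV: "u \<in> V" using u by (simp add: Uset_def)
  have "component V E x = component V E u" by (rule comp_eq[where E=E and V=V, OF sym x uV e])
  thus ?thesis using u x by (simp add: Uset_def)
qed

context
  fixes V :: "'a set" and E :: "'a \<Rightarrow> 'a \<Rightarrow> bool"
  assumes sg: "simple_graph V E"
    and hyp: "\<forall>v\<in>internal V E. leaf_count V E v = 0 \<or> leaf_count V E v = 1"
begin

lemma finV: "finite V" using sg by (simp add: simple_graph_def)
lemma symE: "E u v \<Longrightarrow> E v u" using sg by (simp add: simple_graph_def)
lemma edgeV: "E u v \<Longrightarrow> u \<in> V \<and> v \<in> V" using sg by (simp add: simple_graph_def)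

lemma leaf_unique:
  assumes l: "l \<in> leaves V E"
  shows "\<exists>p. E l p \<and> (\<forall>q. E l q \<longrightarrow> q = p)"
proof -
  have lVU: "l \<in> V - Uset V E" and d: "card {u \<in> V - Uset V E. E l u} = 1"
    using l by (auto simp: leaves_def degree_def)
  then obtain p where p: "{u \<in> V - Uset V E. E l u} = {p}" by (metis card_1_singletonE)
  have "E l p" using p by blast
  moreover have "q = p" if "E l q" for q
  proof -
    have qV: "q \<in> V" using edgeV that by blast
    have "q \<notin> Uset V E"
    proof
      assume "q \<in> Uset V E"
      moreover have "l \<in> V" using lVU by blast
      ultimately have "l \<in> Uset V E" using noU[where E=E and V=V, OF symE] that by blast
      thus False using lVU by blast
    qed
    hence "q \<in> {u \<in> V - Uset V E. E l u}" using qV that by blast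
    thus ?thesis using p by blast
  qed
  ultimately show ?thesis by blast
qed

lemma leaf_parent:
  assumes l: "l \<in> leaves V E" and e: "E l p"
  shows "p \<in> type_set V E 1"
proof -
  have lVU: "l \<in> V - Uset V E" using l by (simp add: leaves_def)
  obtain p0 where p0: "E l p0" "\<forall>q. E l q \<longrightarrow> q = p0" using leaf_unique[OF l] by blast
  have pp: "\<And>q. E l q \<Longrightarrow> q = p" using p0 e by metis
  have pV: "p \<in> V" using edgeV e by blast
  have pU: "p \<notin> Uset V E"
  proof
    assume "p \<in> Uset V E"
    moreover have "l \<in> V" using lVU by blast
    ultimately have "l \<in> Uset V E" using noU[where E=E and V=V, OF symE] e by blast
    thus False using lVU by blast
  qed
  have pL: "p \<notin> leaves V E"
  proof
    assume pl: "p \<in> leaves V E"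
    obtain p1 where p1: "E p p1" "\<forall>q. E p q \<longrightarrow> q = p1" using leaf_unique[OF pl] by blast
    have pp': "\<And>q. E p q \<Longrightarrow> q = l" using p1 symE[OF e] by metis
    have sub: "component V E l \<subseteq> {l, p}"
    proof
      fix w assume "w \<in> component V E l"
      hence "(\<lambda>x y. x \<in> V \<and> y \<in> V \<and> E x y)\<^sup>*\<^sup>* l w" by (simp add: component_def)
      thus "w \<in> {l, p}"
        by (induction rule: rtranclp_induct) (use pp pp' in auto)
    qed
    have "is_clique E (component V E l)"
      unfolding is_clique_def using sub e symE[OF e] by blast
    hence "l \<in> Uset V E" using lVU by (simp add: Uset_def)
    thus False using lVU by blast
  qed
  have pI: "p \<in> internal V E" using pV pU pL by (auto simp: internal_def leaves_def)
  have "leaf_count V E p \<noteq> 0"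
  proof -
    have "finite {u \<in> leaves V E. E p u}" using finV by (rule finite_subset[rotated]) (auto simp: leaves_def)
    moreover have "l \<in> {u \<in> leaves V E. E p u}" using l symE[OF e] by blast
    ultimately show ?thesis unfolding leaf_count_def by (metis card_0_eq empty_iff)
  qed
  moreover have "leaf_count V E p = 0 \<or> leaf_count V E p = 1" using hyp pI by (rule bspec)
  ultimately have "leaf_count V E p = 1" by simp
  thus ?thesis using pI by (simp add: type_set_def)
qed

definition fl :: "'a \<Rightarrow> 'a" where
  "fl b = (SOME l. l \<in> leaves V E \<and> E b l)"

lemma B_leaf:
  assumes b: "b \<in> type_set V E 1"
  shows "fl b \<in> leaves V E \<and> E b (fl b)" "\<And>l. l \<in> leaves V E \<Longrightarrow> E b l \<Longrightarrow> l = fl b"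
proof -
  have "card {u \<in> leaves V E. E b u} = 1" using b by (simp add: type_set_def leaf_count_def)
  then obtain l0 where l0: "{u \<in> leaves V E. E b u} = {l0}" by (metis card_1_singletonE)
  have ex: "\<exists>l. l \<in> leaves V E \<and> E b l" using l0 by blast
  show fb: "fl b \<in> leaves V E \<and> E b (fl b)" unfolding fl_def by (rule someI_ex[OF ex])
  fix l assume "l \<in> leaves V E" "E b l"
  hence "l = l0" "fl b = l0" using l0 fb by blast+
  thus "l = fl b" by simp
qed

lemma core_inst: "core V E (type_set V E 0) (type_set V E 1) (leaves V E) fl"
proof
  show "finite V" by (rule finV)
  show "\<And>u v. E u v \<Longrightarrow> u \<in> V \<and> v \<in> V" by (rule edgeV)
  show "\<And>u v. E u v \<Longrightarrow> E v u" by (rule symE)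
  have UV: "Uset V E \<subseteq> V" by (auto simp: Uset_def)
  show "V = type_set V E 0 \<union> type_set V E 1 \<union> leaves V E"
    using hyp UV by (auto simp: type_set_def internal_def leaves_def)
  show "type_set V E 0 \<inter> type_set V E 1 = {}"
    by (auto simp: type_set_def internal_def)
  show "type_set V E 0 \<inter> leaves V E = {}"
    by (auto simp: type_set_def internal_def leaves_def)
  show "type_set V E 1 \<inter> leaves V E = {}"
    by (auto simp: type_set_def internal_def leaves_def)
  show "\<And>b. b \<in> type_set V E 1 \<Longrightarrow> E b (fl b)" using B_leaf(1) by blast
  show Lnb: "\<And>l q. l \<in> leaves V E \<Longrightarrow> E l q \<Longrightarrow> q \<in> type_set V E 1 \<and> fl q = l"
  proof -
    fix l q assume l: "l \<in> leaves V E" and e: "E l q"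
    have qB: "q \<in> type_set V E 1" by (rule leaf_parent[OF l e])
    have "l = fl q" by (rule B_leaf(2)[OF qB l symE[OF e]])
    thus "q \<in> type_set V E 1 \<and> fl q = l" using qB by simp
  qed
  show "bij_betw fl (type_set V E 1) (leaves V E)"
    unfolding bij_betw_def
  proof
    show "inj_on fl (type_set V E 1)"
    proof
      fix b1 b2 assume b1: "b1 \<in> type_set V E 1" and b2: "b2 \<in> type_set V E 1" and eq: "fl b1 = fl b2"
      have l: "fl b1 \<in> leaves V E" using B_leaf(1)[OF b1] by blast
      have "E (fl b1) b1" "E (fl b1) b2" using B_leaf(1)[OF b1] B_leaf(1)[OF b2] eq symE by auto
      thus "b1 = b2" using leaf_unique[OF l] by metis
    qed
    show "fl ` type_set V E 1 = leaves V E"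
    proof
      show "fl ` type_set V E 1 \<subseteq> leaves V E" using B_leaf(1) by blast
      show "leaves V E \<subseteq> fl ` type_set V E 1"
      proof
        fix l assume l: "l \<in> leaves V E"
        obtain p where "E l p" using leaf_unique[OF l] by blast
        thus "l \<in> fl ` type_set V E 1" using Lnb[OF l] by (metis imageI)
      qed
    qed
  qed
qed

end


theorem corollary10:
  fixes V :: "'a set" and E :: "'a \<Rightarrow> 'a \<Rightarrow> bool"
  assumes "simple_graph V E"
    and "\<forall>v\<in>internal V E. leaf_count V E v = 0 \<or> leaf_count V E v = 1"
  shows "(well_covered V E \<longleftrightarrow>
            well_covered (type_set V E 0) E \<and>
            (\<forall>I. indep (type_set V E 1) E I \<and> card I \<le> max_comp_size (type_set V E 0) E \<longrightarrow>
                 imin (type_set V E 0 - nbhd_set V E I) E = alpha (type_set V E 0) E))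
       \<and> (mu_alpha V E \<le> 1 \<longleftrightarrow>
            mu_alpha (type_set V E 0) E \<le> 1 \<and>
            (\<forall>I. indep (type_set V E 1) E I \<and> card I \<le> 2 * max_comp_size (type_set V E 0) E \<longrightarrow>
                 int (alpha (type_set V E 0) E) - int (imin (type_set V E 0 - nbhd_set V E I) E) \<le> 1))"
proof -
  define A where "A = type_set V E 0"
  define B where "B = type_set V E 1"
  define L where "L = leaves V E"
  define f where "f = fl V E"
  interpret core V E A B L f
    unfolding A_def B_def L_def f_def by (rule core_inst[OF assms])
  define a where "a = alpha A E"
  define t where "t I = imin (A - nbhd_set V E I) E" for I
  define n0 where "n0 = max_comp_size A E"
  have t0: "t {} = imin A E" unfolding t_def by (simp add: nbhd_set_def)
  have hP1: "alpha V E = card B + a" unfolding a_def by (rule P1)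
  obtain I0 where I0: "indep B E I0" "imin V E = card B + t I0" using P2 unfolding t_def by blast
  have hP3: "\<And>I. indep B E I \<Longrightarrow> imin V E \<le> card B + t I" unfolding t_def by (rule P3)
  have hP4: "\<And>I. t I \<le> a" unfolding t_def a_def by (rule P4)
  have R: "\<exists>I'. indep B E I' \<and> card I' \<le> k * n0 \<and> t I' + k \<le> a"
    if Ii: "indep B E I" and tk: "t I + k \<le> a" for I k
  proof -
    have fA': "finite (A - nbhd_set V E I)" using finA by simp
    obtain J where J: "maximal_indep (A - nbhd_set V E I) E J" "card J = t I"
      using imin_ex[OF fA'] unfolding t_def by blast
    have AV: "A \<subseteq> V" using Vdec by blast
    have "card J + k \<le> alpha A E" using tk J(2) unfolding a_def by simp
    from reduction[OF fin sym AV J(1) this]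
    obtain I' where I': "I' \<subseteq> I" "card I' \<le> k * n0" "t I' + k \<le> a"
      unfolding t_def a_def n0_def by blast
    have "indep B E I'" using Ii I'(1) by (rule indep_subset) (use Ii I'(1) in \<open>auto simp: indep_def\<close>)
    thus ?thesis using I' by blast
  qed
  have wc: "well_covered V E \<longleftrightarrow> t I0 = a"
    unfolding well_covered_def mu_alpha_def using hP1 I0(2) by auto
  have mu: "mu_alpha V E \<le> 1 \<longleftrightarrow> a \<le> t I0 + 1"
    unfolding mu_alpha_def using hP1 I0(2) by auto
  have part1: "well_covered V E \<longleftrightarrow> well_covered A E \<and>
      (\<forall>I. indep B E I \<and> card I \<le> n0 \<longrightarrow> t I = a)"
  proof
    assume "well_covered V E"
    hence eq: "t I0 = a" using wc by simp
    have all: "t I = a" if "indep B E I" for I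
      using hP3[OF that] I0(2) eq hP4[of I] by linarith
    have "well_covered A E"
      using all[of "{}"] t0 unfolding well_covered_def mu_alpha_def a_def by simp
    thus "well_covered A E \<and> (\<forall>I. indep B E I \<and> card I \<le> n0 \<longrightarrow> t I = a)" using all by blast
  next
    assume h: "well_covered A E \<and> (\<forall>I. indep B E I \<and> card I \<le> n0 \<longrightarrow> t I = a)"
    show "well_covered V E"
    proof (rule ccontr)
      assume "\<not> well_covered V E"
      hence "t I0 + 1 \<le> a" using wc hP4[of I0] by linarith
      from R[OF I0(1) this] obtain I' where "indep B E I'" "card I' \<le> n0" "t I' + 1 \<le> a" by auto
      thus False using h by fastforce
    qed
  qed
  have part2: "mu_alpha V E \<le> 1 \<longleftrightarrow> mu_alpha A E \<le> 1 \<and>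
      (\<forall>I. indep B E I \<and> card I \<le> 2 * n0 \<longrightarrow> int a - int (t I) \<le> 1)"
  proof
    assume "mu_alpha V E \<le> 1"
    hence eq: "a \<le> t I0 + 1" using mu by simp
    have all: "a \<le> t I + 1" if "indep B E I" for I
      using hP3[OF that] I0(2) eq by linarith
    have "mu_alpha A E \<le> 1"
      using all[of "{}"] t0 unfolding mu_alpha_def a_def by simp
    thus "mu_alpha A E \<le> 1 \<and> (\<forall>I. indep B E I \<and> card I \<le> 2 * n0 \<longrightarrow> int a - int (t I) \<le> 1)"
      using all by force
  next
    assume h: "mu_alpha A E \<le> 1 \<and> (\<forall>I. indep B E I \<and> card I \<le> 2 * n0 \<longrightarrow> int a - int (t I) \<le> 1)"
    show "mu_alpha V E \<le> 1"
    proof (rule ccontr)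
      assume "\<not> mu_alpha V E \<le> 1"
      hence "t I0 + 2 \<le> a" using mu by linarith
      from R[OF I0(1) this] obtain I' where "indep B E I'" "card I' \<le> 2 * n0" "t I' + 2 \<le> a" by auto
      thus False using h by fastforce
    qed
  qed
  show ?thesis using part1 part2 unfolding A_def B_def t_def a_def n0_def by simp
qed

end
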